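(* Domineering on the $2 \times 5$ torus and on the $2 \times 9$ torus are second-player wins, and Domineering on the $2 \times 13$ torus is a win for Hepzibah regardless of who moves first.
   Context: Domineering: Vera places vertical dominoes (covering two vertically adjacent empty cells), Hepzibah places horizontal dominoes (covering two horizontally adjacent empty cells); players alternate, and a player who cannot move on her turn loses. The $2 \times n$ torus is the array of $2$ rows and $n$ columns of cells with both pairs of opposite edges identified, so horizontal adjacency wraps around from column $n$ to column $1$ (and a vertical domino occupies both cells of a column). *)

theory Defs
  imports Main
begin

text \<open>Domineering on the 2 x n torus. A cell is a pair (row, column) with
row in {0,1} and column in {0..<n}; a position is the set of occupied cells.\<close>

datatype player = Vera | Hepzibah

fun other :: "player \<Rightarrow> player" where
  "other Vera = Hepzibah"
| "other Hepzibah = Vera"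

definition moves :: "nat \<Rightarrow> player \<Rightarrow> (nat \<times> nat) set \<Rightarrow> (nat \<times> nat) set set" where
  "moves n p S =
     (case p of
        Vera \<Rightarrow> {S \<union> {(0, c), (1, c)} | c. c < n \<and> (0, c) \<notin> S \<and> (1, c) \<notin> S}
      | Hepzibah \<Rightarrow> {S \<union> {(r, c), (r, (c + 1) mod n)} | r c.
                      r < 2 \<and> c < n \<and> (r, c) \<notin> S \<and> (r, (c + 1) mod n) \<notin> S
                      \<and> (c + 1) mod n \<noteq> c})"

text \<open>wins_fuel n k p S: the player p to move at S has a winning strategy,
looking at most k moves ahead (normal play: no move means loss).\<close>

fun wins_fuel :: "nat \<Rightarrow> nat \<Rightarrow> player \<Rightarrow> (nat \<times> nat) set \<Rightarrow> bool" where
  "wins_fuel n 0 p S = False"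
| "wins_fuel n (Suc k) p S = (\<exists>S' \<in> moves n p S. \<not> wins_fuel n k (other p) S')"

text \<open>Every move covers two of the 2n cells, so a game lasts at most n moves;
fuel 2n+1 therefore makes the evaluation exact.\<close>

definition first_player_wins :: "nat \<Rightarrow> player \<Rightarrow> bool" where
  "first_player_wins n p = wins_fuel n (2 * n + 1) p {}"

definition second_player_win :: "nat \<Rightarrow> bool" where
  "second_player_win n = (\<not> first_player_wins n Vera \<and> \<not> first_player_wins n Hepzibah)"

definition hepzibah_win :: "nat \<Rightarrow> bool" where
  "hepzibah_win n = (first_player_wins n Hepzibah \<and> \<not> first_player_wins n Vera)"

end

theory Submission
  imports Defs
begin

type_synonym cols = "(bool \<times> bool) list"
fun vm :: "cols \<Rightarrow> cols list" where
  "vm [] = []"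
| "vm (x#xs) = (if x = (False,False) then [(True,True)#xs] else []) @ map ((#) x) (vm xs)"
fun hin0 :: "cols \<Rightarrow> cols list" where
  "hin0 (x#y#xs) = (if \<not> fst x \<and> \<not> fst y then [(True, snd x)#(True, snd y)#xs] else []) @ map ((#) x) (hin0 (y#xs))"
| "hin0 _ = []"
fun hin1 :: "cols \<Rightarrow> cols list" where
  "hin1 (x#y#xs) = (if \<not> snd x \<and> \<not> snd y then [(fst x, True)#(fst y, True)#xs] else []) @ map ((#) x) (hin1 (y#xs))"
| "hin1 _ = []"
definition hw0 :: "cols \<Rightarrow> cols list" where
  "hw0 xs = (if 2 \<le> length xs \<and> \<not> fst (hd xs) \<and> \<not> fst (last xs) then [(True, snd (hd xs)) # butlast (tl xs) @ [(True, snd (last xs))]] else [])"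
definition hw1 :: "cols \<Rightarrow> cols list" where
  "hw1 xs = (if 2 \<le> length xs \<and> \<not> snd (hd xs) \<and> \<not> snd (last xs) then [(fst (hd xs), True) # butlast (tl xs) @ [(fst (last xs), True)]] else [])"
definition hm :: "cols \<Rightarrow> cols list" where
  "hm xs = hin0 xs @ hw0 xs @ hin1 xs @ hw1 xs"
fun cm :: "player \<Rightarrow> cols \<Rightarrow> cols list" where
  "cm Vera xs = vm xs" | "cm Hepzibah xs = hm xs"
datatype cert = W nat cert | L "cert list"
fun winc :: "nat \<Rightarrow> player \<Rightarrow> cols \<Rightarrow> cert \<Rightarrow> bool"
and losec :: "nat \<Rightarrow> player \<Rightarrow> cols \<Rightarrow> cert \<Rightarrow> bool"
and pickc :: "nat \<Rightarrow> player \<Rightarrow> nat \<Rightarrow> cols list \<Rightarrow> cert \<Rightarrow> bool"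
and allw :: "nat \<Rightarrow> player \<Rightarrow> cols list \<Rightarrow> cert list \<Rightarrow> bool" where
  "winc k p xs (W i c) = (0 < k \<and> pickc (k - 1) (other p) i (cm p xs) c)"
| "winc k p xs (L cs) = False"
| "losec k p xs (L cs) = (k = 0 \<or> allw (k - 1) (other p) (cm p xs) cs)"
| "losec k p xs (W i c) = (k = 0)"
| "pickc k p i [] c = False"
| "pickc k p i (y#ys) c = (if i = 0 then losec k p y c else pickc k p (i - 1) ys c)"
| "allw k p [] [] = True"
| "allw k p (y#ys) (c#cs) = (winc k p y c \<and> allw k p ys cs)"
| "allw k p [] (c#cs) = False"
| "allw k p (y#ys) [] = False"
lemma winc_cong: "k = k' \<Longrightarrow> p = p' \<Longrightarrow> xs = xs' \<Longrightarrow> winc k p xs c = winc k' p' xs' c" by simp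
lemma losec_cong: "k = k' \<Longrightarrow> p = p' \<Longrightarrow> xs = xs' \<Longrightarrow> losec k p xs c = losec k' p' xs' c" by simp
lemma pickc_cong: "k = k' \<Longrightarrow> p = p' \<Longrightarrow> i = i' \<Longrightarrow> xs = xs' \<Longrightarrow> pickc k p i xs c = pickc k' p' i' xs' c" by simp
lemma allw_cong: "k = k' \<Longrightarrow> p = p' \<Longrightarrow> xs = xs' \<Longrightarrow> allw k p xs c = allw k' p' xs' c" by simp
definition absc :: "cols \<Rightarrow> (nat \<times> nat) set" where
  "absc xs = {(r,c). c < length xs \<and> (r = 0 \<and> fst (xs!c) \<or> r = 1 \<and> snd (xs!c))}"

lemma vm_mem: "ys \<in> set (vm xs) \<longleftrightarrow> (\<exists>c < length xs. xs!c = (False,False) \<and> ys = xs[c := (True,True)])"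
proof (induction xs arbitrary: ys)
  case Nil then show ?case by simp
next
  case (Cons x xs)
  show ?case
    unfolding length_Cons Ex_less_Suc2 using Cons by auto
qed

lemma hin0_mem: "ys \<in> set (hin0 xs) \<longleftrightarrow> (\<exists>c. Suc c < length xs \<and> \<not> fst (xs!c) \<and> \<not> fst (xs!Suc c) \<and>
     ys = xs[c := (True, snd (xs!c)), Suc c := (True, snd (xs!Suc c))])"
proof (induction xs arbitrary: ys rule: hin0.induct)
  case (1 x y xs)
  have e: "(\<exists>c. Suc c < length (x#y#xs) \<and> Q c) \<longleftrightarrow> Q 0 \<or> (\<exists>c. Suc c < length (y#xs) \<and> Q (Suc c))" for Q
    by (metis Suc_less_eq length_Cons not0_implies_Suc zero_less_Suc)
  show ?case unfolding e using 1 by auto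
qed auto

lemma hin1_mem: "ys \<in> set (hin1 xs) \<longleftrightarrow> (\<exists>c. Suc c < length xs \<and> \<not> snd (xs!c) \<and> \<not> snd (xs!Suc c) \<and>
     ys = xs[c := (fst (xs!c), True), Suc c := (fst (xs!Suc c), True)])"
proof (induction xs arbitrary: ys rule: hin1.induct)
  case (1 x y xs)
  have e: "(\<exists>c. Suc c < length (x#y#xs) \<and> Q c) \<longleftrightarrow> Q 0 \<or> (\<exists>c. Suc c < length (y#xs) \<and> Q (Suc c))" for Q
    by (metis Suc_less_eq length_Cons not0_implies_Suc zero_less_Suc)
  show ?case unfolding e using 1 by auto
qed auto
lemma wrap_eq0: assumes "2 \<le> length xs"
  shows "(True, snd (hd xs)) # butlast (tl xs) @ [(True, snd (last xs))] =
     xs[0 := (True, snd (xs!0)), length xs - 1 := (True, snd (xs!(length xs - 1)))]"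
proof -
  obtain a zs b where xs: "xs = a # zs @ [b]" using assms
    by (metis One_nat_def Suc_1 Suc_le_length_iff rev_exhaust list.distinct(1) append_Nil)
  show ?thesis unfolding xs by (simp add: list_update_append nth_append)
qed

lemma wrap_eq1: assumes "2 \<le> length xs"
  shows "(fst (hd xs), True) # butlast (tl xs) @ [(fst (last xs), True)] =
     xs[0 := (fst (xs!0), True), length xs - 1 := (fst (xs!(length xs - 1)), True)]"
proof -
  obtain a zs b where xs: "xs = a # zs @ [b]" using assms
    by (metis One_nat_def Suc_1 Suc_le_length_iff rev_exhaust list.distinct(1) append_Nil)
  show ?thesis unfolding xs by (simp add: list_update_append nth_append)
qed

lemma hw0_mem: "ys \<in> set (hw0 xs) \<longleftrightarrow> 2 \<le> length xs \<and> \<not> fst (xs!0) \<and> \<not> fst (xs!(length xs - 1)) \<and>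
   ys = xs[0 := (True, snd (xs!0)), length xs - 1 := (True, snd (xs!(length xs - 1)))]"
  unfolding hw0_def using wrap_eq0[of xs]
  by (cases xs) (auto simp: last_conv_nth)

lemma hw1_mem: "ys \<in> set (hw1 xs) \<longleftrightarrow> 2 \<le> length xs \<and> \<not> snd (xs!0) \<and> \<not> snd (xs!(length xs - 1)) \<and>
   ys = xs[0 := (fst (xs!0), True), length xs - 1 := (fst (xs!(length xs - 1)), True)]"
  unfolding hw1_def using wrap_eq1[of xs]
  by (cases xs) (auto simp: last_conv_nth)

lemma absc_mem: "(r,c) \<in> absc xs \<longleftrightarrow> c < length xs \<and> (r = 0 \<and> fst (xs!c) \<or> r = 1 \<and> snd (xs!c))"
  by (simp add: absc_def)

lemma absc_updV: "c < length xs \<Longrightarrow> absc (xs[c := (True,True)]) = absc xs \<union> {(0,c),(1,c)}"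
  by (auto simp: absc_def nth_list_update)

lemma absc_upd0: "c < length xs \<Longrightarrow> d < length xs \<Longrightarrow>
   absc (xs[c := (True, snd (xs!c)), d := (True, snd (xs!d))]) = absc xs \<union> {(0,c),(0,d)}"
  by (auto simp: absc_def nth_list_update)

lemma absc_upd1: "c < length xs \<Longrightarrow> d < length xs \<Longrightarrow>
   absc (xs[c := (fst (xs!c), True), d := (fst (xs!d), True)]) = absc xs \<union> {(1,c),(1,d)}"
  by (auto simp: absc_def nth_list_update)
lemma moves_V: assumes "length xs = n"
  shows "moves n Vera (absc xs) = absc ` set (vm xs)"
proof (rule set_eqI)
  fix T
  have "T \<in> moves n Vera (absc xs) \<longleftrightarrow> (\<exists>c. T = absc xs \<union> {(0,c),(1,c)} \<and> c < n \<and> (0,c) \<notin> absc xs \<and> (1,c) \<notin> absc xs)"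
    by (auto simp: moves_def)
  also have "\<dots> \<longleftrightarrow> (\<exists>c < length xs. xs!c = (False,False) \<and> T = absc (xs[c := (True,True)]))"
    using assms by (auto simp: absc_updV absc_mem prod_eq_iff)
  also have "\<dots> \<longleftrightarrow> T \<in> absc ` set (vm xs)"
    unfolding image_iff Bex_def vm_mem by blast
  finally show "T \<in> moves n Vera (absc xs) \<longleftrightarrow> T \<in> absc ` set (vm xs)" .
qed

lemma moves_H: assumes len: "length xs = n"
  shows "moves n Hepzibah (absc xs) = absc ` set (hm xs)"
proof (rule set_eqI)
  fix T
  have nf0: "(0,c) \<notin> absc xs \<longleftrightarrow> \<not> (c < n \<and> fst (xs!c))" for c by (simp add: absc_mem len)
  have nf1: "(1,c) \<notin> absc xs \<longleftrightarrow> \<not> (c < n \<and> snd (xs!c))" for c by (simp add: absc_mem len)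
  have "T \<in> moves n Hepzibah (absc xs) \<longleftrightarrow> (\<exists>r c. T = absc xs \<union> {(r,c),(r,(c+1) mod n)} \<and> r < 2 \<and> c < n \<and>
          (r,c) \<notin> absc xs \<and> (r,(c+1) mod n) \<notin> absc xs \<and> (c+1) mod n \<noteq> c)"
    unfolding moves_def by simp
  also have "\<dots> \<longleftrightarrow> (\<exists>c. Suc c < n \<and> \<not> fst (xs!c) \<and> \<not> fst (xs!Suc c) \<and> T = absc xs \<union> {(0,c),(0,Suc c)})
     \<or> (2 \<le> n \<and> \<not> fst (xs!0) \<and> \<not> fst (xs!(n - 1)) \<and> T = absc xs \<union> {(0,0),(0,n-1)})
     \<or> (\<exists>c. Suc c < n \<and> \<not> snd (xs!c) \<and> \<not> snd (xs!Suc c) \<and> T = absc xs \<union> {(1,c),(1,Suc c)})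
     \<or> (2 \<le> n \<and> \<not> snd (xs!0) \<and> \<not> snd (xs!(n - 1)) \<and> T = absc xs \<union> {(1,0),(1,n-1)})"
    (is "?L \<longleftrightarrow> ?R")
  proof
    assume ?L
    then obtain r c where T: "T = absc xs \<union> {(r,c),(r,(c+1) mod n)}" and r: "r < 2" and c: "c < n"
      and f1: "(r,c) \<notin> absc xs" and f2: "(r,(c+1) mod n) \<notin> absc xs" and ne: "(c+1) mod n \<noteq> c" by blast
    have r01: "r = 0 \<or> r = 1" using r by auto
    show ?R
    proof (cases "Suc c < n")
      case True
      then have m: "(c+1) mod n = Suc c" by simp
      show ?thesis
      proof (cases "r = 0")
        case True
        have a1: "\<not> fst (xs!c)" "\<not> fst (xs!Suc c)" using f1 f2 c \<open>Suc c < n\<close> True m by (simp_all add: absc_mem len)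
        have a2: "T = absc xs \<union> {(0,c),(0,Suc c)}" using T True m by simp
        show ?thesis using a1 a2 \<open>Suc c < n\<close> by (intro disjI1 exI[of _ c]) simp
      next
        case False
        then have r1: "r = 1" using r01 by blast
        have a1: "\<not> snd (xs!c)" "\<not> snd (xs!Suc c)" using f1 f2 c \<open>Suc c < n\<close> r1 m by (simp_all add: absc_mem len)
        have a2: "T = absc xs \<union> {(1,c),(1,Suc c)}" using T r1 m by simp
        show ?thesis using a1 a2 \<open>Suc c < n\<close> by (intro disjI2 disjI2 disjI1 exI[of _ c]) simp
      qed
    next
      case False
      then have cn: "c = n - 1" using c by simp
      then have m: "(c+1) mod n = 0" using c by simp
      have n2: "2 \<le> n" using ne m cn c by (cases n) auto
      have T': "T = absc xs \<union> {(r,0),(r,n-1)}" using T m cn by auto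
      have f2': "(r,0) \<notin> absc xs" using f2 m by simp
      have f1': "(r,n-1) \<notin> absc xs" using f1 cn by simp
      have n0: "0 < n" "n - 1 < n" using n2 by auto
      show ?thesis
      proof (cases "r = 0")
        case True
        have a1: "\<not> fst (xs!0)" "\<not> fst (xs!(n-1))" using f1' f2' n0 True by (simp_all add: absc_mem len)
        have a2: "T = absc xs \<union> {(0,0),(0,n-1)}" using T' True by simp
        show ?thesis using a1 a2 n2 by (intro disjI2 disjI1) simp
      next
        case False
        then have r1: "r = 1" using r01 by blast
        have a1: "\<not> snd (xs!0)" "\<not> snd (xs!(n-1))" using f1' f2' n0 r1 by (simp_all add: absc_mem len)
        have a2: "T = absc xs \<union> {(1,0),(1,n-1)}" using T' r1 by simp
        show ?thesis using a1 a2 n2 by (intro disjI2 disjI2 disjI2) simp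
      qed
    qed
  next
    assume ?R
    then show ?L
    proof (elim disjE exE conjE)
      fix c assume a: "Suc c < n" "\<not> fst (xs!c)" "\<not> fst (xs!Suc c)" "T = absc xs \<union> {(0,c),(0,Suc c)}"
      have m: "(c+1) mod n = Suc c" using a(1) by simp
      show ?L apply (rule exI[of _ 0], rule exI[of _ c]) unfolding m nf0 using a by simp
    next
      fix c assume a: "Suc c < n" "\<not> snd (xs!c)" "\<not> snd (xs!Suc c)" "T = absc xs \<union> {(1,c),(1,Suc c)}"
      have m: "(c+1) mod n = Suc c" using a(1) by simp
      show ?L apply (rule exI[of _ 1], rule exI[of _ c]) unfolding m nf1 using a by simp
    next
      assume a: "2 \<le> n" "\<not> fst (xs!0)" "\<not> fst (xs!(n - 1))" "T = absc xs \<union> {(0,0),(0,n-1)}"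
      have m: "(n - 1 + 1) mod n = 0" using a(1) by simp
      have ne: "(0::nat) \<noteq> n - 1" using a(1) by simp
      have T': "T = absc xs \<union> {(0,n-1),(0,0)}" using a(4) by auto
      show ?L apply (rule exI[of _ 0], rule exI[of _ "n-1"]) unfolding m nf0 using a ne T' by simp
    next
      assume a: "2 \<le> n" "\<not> snd (xs!0)" "\<not> snd (xs!(n - 1))" "T = absc xs \<union> {(1,0),(1,n-1)}"
      have m: "(n - 1 + 1) mod n = 0" using a(1) by simp
      have ne: "(0::nat) \<noteq> n - 1" using a(1) by simp
      have T': "T = absc xs \<union> {(1,n-1),(1,0)}" using a(4) by auto
      show ?L apply (rule exI[of _ 1], rule exI[of _ "n-1"]) unfolding m nf1 using a ne T' by simp
    qed
  qed
  also have "\<dots> \<longleftrightarrow> T \<in> absc ` set (hm xs)"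
  proof -
    have e: "T \<in> absc ` set (hm xs) \<longleftrightarrow> (\<exists>ys. ys \<in> set (hin0 xs) \<and> T = absc ys) \<or> (\<exists>ys. ys \<in> set (hw0 xs) \<and> T = absc ys)
       \<or> (\<exists>ys. ys \<in> set (hin1 xs) \<and> T = absc ys) \<or> (\<exists>ys. ys \<in> set (hw1 xs) \<and> T = absc ys)"
      unfolding hm_def by auto
    have e1: "(\<exists>ys. ys \<in> set (hin0 xs) \<and> T = absc ys) \<longleftrightarrow>
        (\<exists>c. Suc c < n \<and> \<not> fst (xs!c) \<and> \<not> fst (xs!Suc c) \<and> T = absc xs \<union> {(0,c),(0,Suc c)})"
      unfolding hin0_mem using absc_upd0 len by (metis Suc_lessD)
    have e2: "(\<exists>ys. ys \<in> set (hin1 xs) \<and> T = absc ys) \<longleftrightarrow>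
        (\<exists>c. Suc c < n \<and> \<not> snd (xs!c) \<and> \<not> snd (xs!Suc c) \<and> T = absc xs \<union> {(1,c),(1,Suc c)})"
      unfolding hin1_mem using absc_upd1 len by (metis Suc_lessD)
    have e3: "(\<exists>ys. ys \<in> set (hw0 xs) \<and> T = absc ys) \<longleftrightarrow>
        (2 \<le> n \<and> \<not> fst (xs!0) \<and> \<not> fst (xs!(n - 1)) \<and> T = absc xs \<union> {(0,0),(0,n-1)})"
      unfolding hw0_mem using absc_upd0[of 0 xs "n-1"] len by auto
    have e4: "(\<exists>ys. ys \<in> set (hw1 xs) \<and> T = absc ys) \<longleftrightarrow>
        (2 \<le> n \<and> \<not> snd (xs!0) \<and> \<not> snd (xs!(n - 1)) \<and> T = absc xs \<union> {(1,0),(1,n-1)})"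
      unfolding hw1_mem using absc_upd1[of 0 xs "n-1"] len by auto
    show ?thesis unfolding e e1 e2 e3 e4 by blast
  qed
  finally show "T \<in> moves n Hepzibah (absc xs) \<longleftrightarrow> T \<in> absc ` set (hm xs)" .
qed
lemma cm_len: "ys \<in> set (cm p xs) \<Longrightarrow> length ys = length xs"
  by (cases p) (auto simp: vm_mem hm_def hin0_mem hin1_mem hw0_mem hw1_mem)

lemma moves_cm: "length xs = n \<Longrightarrow> moves n p (absc xs) = absc ` set (cm p xs)"
  by (cases p) (simp_all add: moves_V moves_H)

lemma sound:
  "(winc k p xs c \<longrightarrow> wins_fuel (length xs) k p (absc xs))"
  "(losec k p xs c \<longrightarrow> \<not> wins_fuel (length xs) k p (absc xs))"
  "(pickc k p i yss c \<longrightarrow> (\<exists>ys \<in> set yss. \<not> wins_fuel (length ys) k p (absc ys)))"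
  "(allw k p yss cs \<longrightarrow> (\<forall>ys \<in> set yss. wins_fuel (length ys) k p (absc ys)))"
proof (induction k p xs c and k p xs c and k p i yss c and k p yss cs rule: winc_losec_pickc_allw.induct)
  case (1 k p xs i c)
  show ?case
  proof
    assume a: "winc k p xs (W i c)"
    then obtain k' where k: "k = Suc k'" by (cases k) auto
    from a 1 k obtain ys where ys: "ys \<in> set (cm p xs)" "\<not> wins_fuel (length ys) k' (other p) (absc ys)" by auto
    have l: "length ys = length xs" using cm_len[OF ys(1)] .
    show "wins_fuel (length xs) k p (absc xs)"
      unfolding k wins_fuel.simps moves_cm[OF refl] using ys l by auto
  qed
next
  case (3 k p xs cs)
  show ?case
  proof
    assume a: "losec k p xs (L cs)"
    show "\<not> wins_fuel (length xs) k p (absc xs)"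
    proof (cases k)
      case 0 then show ?thesis by simp
    next
      case (Suc k')
      with a 3 have "\<forall>ys \<in> set (cm p xs). wins_fuel (length ys) k' (other p) (absc ys)" by auto
      then show ?thesis unfolding Suc wins_fuel.simps moves_cm[OF refl] using cm_len by fastforce
    qed
  qed
next
  case (4 k p xs i c)
  then show ?case by auto
next
  case (6 k p i y ys c)
  then show ?case by (cases "i = 0") auto
qed auto
definition board :: "nat \<Rightarrow> (nat \<times> nat) set" where
  "board n = {(r,c). r < 2 \<and> c < n}"

fun doms :: "nat \<Rightarrow> player \<Rightarrow> (nat \<times> nat) set set" where
  "doms n Vera = {{(0,c),(1,c)} | c. c < n}"
| "doms n Hepzibah = {{(r,c),(r,(c+1) mod n)} | r c. r < 2 \<and> c < n \<and> (c+1) mod n \<noteq> c}"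

lemma moves_doms: "moves n p S = {S \<union> D | D. D \<in> doms n p \<and> D \<inter> S = {}}"
  by (cases p) (auto simp: moves_def)

lemma doms_board: "D \<in> doms n p \<Longrightarrow> D \<subseteq> board n"
  by (cases p) (auto simp: board_def)

lemma moves_board: "S \<subseteq> board n \<Longrightarrow> S' \<in> moves n p S \<Longrightarrow> S' \<subseteq> board n"
  unfolding moves_doms using doms_board by blast

lemma iso_moves:
  assumes inj: "inj_on G (board n)" and dm: "\<And>p. (\<lambda>D. G ` D) ` doms n p = doms n p"
    and S: "S \<subseteq> board n"
  shows "moves n p (G ` S) = (\<lambda>T. G ` T) ` moves n p S"
proof (rule set_eqI)
  fix T
  have "T \<in> moves n p (G ` S) \<longleftrightarrow> (\<exists>D. T = G ` S \<union> D \<and> D \<in> doms n p \<and> D \<inter> G ` S = {})"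
    unfolding moves_doms by blast
  also have "\<dots> \<longleftrightarrow> (\<exists>D'. T = G ` S \<union> G ` D' \<and> D' \<in> doms n p \<and> G ` D' \<inter> G ` S = {})"
    using dm[of p] by (metis (no_types, lifting) image_iff)
  also have "\<dots> \<longleftrightarrow> (\<exists>D'. T = G ` (S \<union> D') \<and> D' \<in> doms n p \<and> D' \<inter> S = {})"
  proof -
    have "D' \<in> doms n p \<Longrightarrow> (G ` D' \<inter> G ` S = {}) = (D' \<inter> S = {})" for D'
      using inj S doms_board[of D' n p] by (simp add: inj_on_image_Int[symmetric] inj_on_Un)
    then show ?thesis by (auto simp: image_Un)
  qed
  also have "\<dots> \<longleftrightarrow> T \<in> (\<lambda>T. G ` T) ` moves n p S"
    unfolding moves_doms by blast
  finally show "T \<in> moves n p (G ` S) \<longleftrightarrow> T \<in> (\<lambda>T. G ` T) ` moves n p S" .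
qed

lemma iso_wins:
  assumes inj: "inj_on G (board n)" and dm: "\<And>p. (\<lambda>D. G ` D) ` doms n p = doms n p"
  shows "S \<subseteq> board n \<Longrightarrow> wins_fuel n k p (G ` S) = wins_fuel n k p S"
proof (induction k arbitrary: p S)
  case 0 then show ?case by simp
next
  case (Suc k)
  have "wins_fuel n (Suc k) p (G ` S) = (\<exists>S' \<in> moves n p S. \<not> wins_fuel n k (other p) (G ` S'))"
    unfolding wins_fuel.simps iso_moves[OF inj dm Suc.prems] by blast
  also have "\<dots> = (\<exists>S' \<in> moves n p S. \<not> wins_fuel n k (other p) S')"
    using Suc.IH moves_board[OF Suc.prems] by blast
  finally show ?case by simp
qed
definition gm :: "nat \<Rightarrow> bool \<Rightarrow> nat \<Rightarrow> nat \<times> nat \<Rightarrow> nat \<times> nat" where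
  "gm n s t = (\<lambda>(r,c). (if s then 1 - r else r, (c + t) mod n))"

lemma gm_inj: "inj_on (gm n s t) (board n)"
proof (rule inj_onI)
  fix x y assume x: "x \<in> board n" and y: "y \<in> board n" and e: "gm n s t x = gm n s t y"
  obtain r1 c1 r2 c2 where xy: "x = (r1,c1)" "y = (r2,c2)" by (cases x, cases y) auto
  have b: "r1 < 2" "c1 < n" "r2 < 2" "c2 < n" using x y xy by (auto simp: board_def)
  have e1: "(if s then 1 - r1 else r1) = (if s then 1 - r2 else r2)" and e2: "(c1 + t) mod n = (c2 + t) mod n"
    using e xy by (auto simp: gm_def)
  have "c1 mod n = c2 mod n" using e2 nat_mod_eq_iff by auto
  then have "c1 = c2" using b by simp
  moreover have "r1 = r2" using e1 b by (cases s) auto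
  ultimately show "x = y" using xy by simp
qed

lemma pre_ex: fixes d n t :: nat assumes "d < n" "t \<le> n" shows "\<exists>c<n. (c + t) mod n = d"
proof -
  have "((d + n - t) mod n + t) mod n = (d + n - t + t) mod n" by (simp add: mod_add_left_eq)
  also have "\<dots> = d" using assms by simp
  finally show ?thesis using assms by (intro exI[of _ "(d + n - t) mod n"]) simp
qed

lemma mod_fix: fixes c n :: nat assumes "c < n" shows "((c + 1) mod n = c) \<longleftrightarrow> n = 1"
proof (cases "n = 1")
  case True then have "c = 0" using assms by simp then show ?thesis using True by simp
next
  case False
  show ?thesis
  proof (cases "c + 1 < n")
    case True then show ?thesis using False by simp
  next
    case F2: False
    then have "c + 1 = n" using assms by simp
    then have "(c + 1) mod n = 0" by simp
    moreover have "c \<noteq> 0" using \<open>c + 1 = n\<close> False by auto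
    ultimately show ?thesis using False by simp
  qed
qed

lemma gm_V: "gm n s t ` {(0,c),(1,c)} = {(0,(c+t) mod n),(1,(c+t) mod n)}"
  by (cases s) (auto simp: gm_def)

lemma gm_H: "r < 2 \<Longrightarrow> gm n s t ` {(r,c),(r,(c+1) mod n)} =
   {(if s then 1 - r else r, (c+t) mod n), (if s then 1 - r else r, ((c+t) mod n + 1) mod n)}"
proof -
  have a: "((c + 1) mod n + t) mod n = (c + 1 + t) mod n" by (rule mod_add_left_eq)
  have b: "((c + t) mod n + 1) mod n = (c + t + 1) mod n" by (rule mod_add_left_eq)
  have cc: "c + 1 + t = c + t + 1" by simp
  have "((c + 1) mod n + t) mod n = ((c+t) mod n + 1) mod n" by (simp only: a b cc)
  then show ?thesis by (simp add: gm_def)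
qed

lemma domsV_mem: "D \<in> doms n Vera \<longleftrightarrow> (\<exists>c. c < n \<and> D = {(0,c),(1,c)})"
  by auto

lemma domsH_mem: "D \<in> doms n Hepzibah \<longleftrightarrow> (\<exists>r c. r < 2 \<and> c < n \<and> (c+1) mod n \<noteq> c \<and> D = {(r,c),(r,(c+1) mod n)})"
  by auto

lemma gm_doms: assumes "t \<le> n" shows "(\<lambda>D. gm n s t ` D) ` doms n p = doms n p"
proof (cases p)
  case Vera
  show ?thesis
  proof (rule set_eqI, rule iffI)
    fix D assume "D \<in> (\<lambda>D. gm n s t ` D) ` doms n p"
    then obtain D0 where "D0 \<in> doms n Vera" "D = gm n s t ` D0" using Vera by blast
    then obtain c where c: "c < n" "D = gm n s t ` {(0,c),(1,c)}" unfolding domsV_mem by blast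
    have "(c + t) mod n < n" using c by simp
    then show "D \<in> doms n p" unfolding c(2) gm_V Vera domsV_mem by blast
  next
    fix D assume "D \<in> doms n p"
    then obtain d where d: "d < n" "D = {(0,d),(1,d)}" using Vera domsV_mem by blast
    then obtain c where c: "c < n" "(c + t) mod n = d" using pre_ex assms by blast
    have D: "D = gm n s t ` {(0,c),(1,c)}" unfolding gm_V c d ..
    have "{(0,c),(1,c)} \<in> doms n p" unfolding Vera domsV_mem using c by blast
    then show "D \<in> (\<lambda>D. gm n s t ` D) ` doms n p" using D by blast
  qed
next
  case Hepzibah
  show ?thesis
  proof (rule set_eqI, rule iffI)
    fix D assume "D \<in> (\<lambda>D. gm n s t ` D) ` doms n p"
    then obtain D0 where "D0 \<in> doms n Hepzibah" "D = gm n s t ` D0" using Hepzibah by blast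
    then obtain r c where rc: "r < 2" "c < n" "(c+1) mod n \<noteq> c" "D = gm n s t ` {(r,c),(r,(c+1) mod n)}"
      unfolding domsH_mem by blast
    have n1: "n \<noteq> 1" using mod_fix[OF rc(2)] rc(3) by simp
    have d: "(c+t) mod n < n" using rc by simp
    have ne: "((c+t) mod n + 1) mod n \<noteq> (c+t) mod n" using mod_fix[OF d] n1 by simp
    have r2: "(if s then 1 - r else r) < 2" using rc by auto
    show "D \<in> doms n p" unfolding rc(4) gm_H[OF rc(1)] Hepzibah domsH_mem
      by (rule exI[of _ "if s then 1 - r else r"], rule exI[of _ "(c+t) mod n"]) (simp only: d ne r2 simp_thms)
  next
    fix D assume "D \<in> doms n p"
    then obtain r d where rd: "r < 2" "d < n" "(d+1) mod n \<noteq> d" "D = {(r,d),(r,(d+1) mod n)}"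
      using Hepzibah domsH_mem by blast
    then obtain c where c: "c < n" "(c + t) mod n = d" using pre_ex assms by blast
    have n1: "n \<noteq> 1" using mod_fix[OF rd(2)] rd(3) by simp
    have cc: "(c+1) mod n \<noteq> c" using mod_fix[OF c(1)] n1 by simp
    define r' where "r' = (if s then 1 - r else r)"
    have r': "r' < 2" "(if s then 1 - r' else r') = r" using rd unfolding r'_def by auto
    have D: "D = gm n s t ` {(r',c),(r',(c+1) mod n)}" unfolding gm_H[OF r'(1)] r'(2) c(2) rd(4) ..
    have "{(r',c),(r',(c+1) mod n)} \<in> doms n p" unfolding Hepzibah domsH_mem
      by (rule exI[of _ r'], rule exI[of _ c]) (simp only: r' c cc simp_thms)
    then show "D \<in> (\<lambda>D. gm n s t ` D) ` doms n p" using D by blast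
  qed
qed

lemma gm_wins: "t \<le> n \<Longrightarrow> S \<subseteq> board n \<Longrightarrow> wins_fuel n k p (gm n s t ` S) = wins_fuel n k p S"
  by (rule iso_wins[OF gm_inj gm_doms])
lemma absc_rep: "absc (replicate m (False,False)) = {}"
  by (auto simp: absc_def)

lemma absc_Cons_mem: "(r,c) \<in> absc (x#xs) \<longleftrightarrow> (c = 0 \<and> (r = 0 \<and> fst x \<or> r = 1 \<and> snd x)) \<or> (\<exists>c'. c = Suc c' \<and> (r,c') \<in> absc xs)"
  by (cases c) (auto simp: absc_mem)

lemma absc_V0: "absc ((True,True) # replicate m (False,False)) = {(0,0),(1,0)}"
  apply (rule set_eqI)
  subgoal for x by (cases x) (auto simp: absc_Cons_mem absc_rep)
  done

lemma absc_H0: "absc ((True,False) # (True,False) # replicate m (False,False)) = {(0,0),(0,1)}"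
  apply (rule set_eqI)
  subgoal for x by (cases x) (auto simp: absc_Cons_mem absc_rep)
  done

lemma from_cert: "winc k p xs c \<Longrightarrow> wins_fuel (length xs) k p (absc xs)"
  using sound(1) by blast

lemma vera_first_loses:
  assumes n: "0 < n" and W: "wins_fuel n k Hepzibah {(0,0),(1,0)}"
  shows "\<not> wins_fuel n (Suc k) Vera {}"
proof -
  have "wins_fuel n k Hepzibah S'" if "S' \<in> moves n Vera {}" for S'
  proof -
    obtain c where c: "c < n" "S' = {(0,c),(1,c)}" using \<open>S' \<in> moves n Vera {}\<close> by (auto simp: moves_def)
    have e: "S' = gm n False c ` {(0,0),(1,0)}" using c by (simp add: gm_def)
    have b: "{(0,0),(1,0)} \<subseteq> board n" using n by (auto simp: board_def)
    show ?thesis unfolding e using gm_wins[OF less_imp_le[OF c(1)] b] W by simp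
  qed
  then show ?thesis by auto
qed

lemma hepz_first_loses:
  assumes n: "2 \<le> n" and W: "wins_fuel n k Vera {(0,0),(0,1)}"
  shows "\<not> wins_fuel n (Suc k) Hepzibah {}"
proof -
  have "wins_fuel n k Vera S'" if "S' \<in> moves n Hepzibah {}" for S'
  proof -
    obtain r c where c: "r < 2" "c < n" "S' = {(r,c),(r,(c+1) mod n)}" using \<open>S' \<in> moves n Hepzibah {}\<close> by (auto simp: moves_def)
    have e: "S' = gm n (r = 1) c ` {(0,0),(0,1)}" using c by (auto simp: gm_def add.commute)
    have b: "{(0,0),(0,1)} \<subseteq> board n" using n by (auto simp: board_def)
    show ?thesis unfolding e using gm_wins[OF less_imp_le[OF c(2)] b] W by simp
  qed
  then show ?thesis by auto
qed

lemma cV5: "winc 10 Hepzibah [(True,True),(False,False),(False,False),(False,False),(False,False)] (W 1 (L [(W 1 (L [])),(W 0 (L []))]))"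
  by (simp add: hm_def hw0_def hw1_def)

lemma cH5: "winc 10 Vera [(True,False),(True,False),(False,False),(False,False),(False,False)] (W 1 (L [(W 0 (L [])),(W 0 (L [])),(W 0 (L []))]))"
  by (simp add: hm_def hw0_def hw1_def)

lemma cV9: "winc 18 Hepzibah [(True,True),(False,False),(False,False),(False,False),(False,False),(False,False),(False,False),(False,False),(False,False)] (W 0 (L [(W 0 (L [(W 0 (L [])),(W 2 (L [(W 0 (L []))])),(W 0 (L []))])),(W 0 (L [(W 0 (L [])),(W 1 (L [(W 0 (L []))])),(W 1 (L [(W 0 (L []))]))])),(W 1 (L [(W 2 (L [(W 0 (L []))])),(W 1 (L [(W 0 (L []))])),(W 0 (L []))])),(W 2 (L [(W 0 (L [])),(W 1 (L [(W 0 (L []))])),(W 0 (L []))])),(W 2 (L [(W 1 (L [(W 0 (L []))])),(W 1 (L [(W 0 (L []))])),(W 0 (L []))])),(W 0 (L [(W 0 (L [])),(W 3 (L [(W 0 (L []))])),(W 0 (L []))]))]))"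
  by (simp add: hm_def hw0_def hw1_def)

lemma cH9: "winc 18 Vera [(True,False),(True,False),(False,False),(False,False),(False,False),(False,False),(False,False),(False,False),(False,False)] (W 3 (L [(W 2 (L [(W 0 (L [(W 0 (L []))])),(W 0 (L [(W 0 (L []))])),(W 2 (L [(W 0 (L []))])),(W 1 (L [(W 0 (L [])),(W 0 (L []))])),(W 0 (L [(W 0 (L [])),(W 0 (L []))]))])),(W 2 (L [(W 0 (L [(W 0 (L []))])),(W 1 (L [(W 0 (L []))])),(W 1 (L [(W 0 (L []))])),(W 0 (L [(W 0 (L [])),(W 0 (L []))])),(W 0 (L [(W 0 (L []))]))])),(W 1 (L [(W 2 (L [(W 0 (L []))])),(W 1 (L [(W 0 (L []))])),(W 0 (L [(W 0 (L [])),(W 0 (L []))])),(W 0 (L [(W 0 (L []))])),(W 0 (L [(W 0 (L []))]))])),(W 1 (L [(W 2 (L [(W 0 (L []))])),(W 1 (L [(W 0 (L [])),(W 0 (L []))])),(W 0 (L [(W 0 (L [])),(W 0 (L []))])),(W 0 (L [(W 0 (L []))])),(W 0 (L [(W 0 (L []))]))])),(W 1 (L [(W 2 (L [(W 0 (L []))])),(W 2 (L [(W 0 (L []))])),(W 2 (L [(W 0 (L []))])),(W 2 (L [(W 0 (L []))]))])),(W 3 (L [(W 0 (L [(W 0 (L []))])),(W 1 (L [(W 0 (L []))])),(W 1 (L [(W 0 (L [])),(W 0 (L []))])),(W 0 (L []))])),(W 2 (L [(W 2 (L [(W 0 (L []))])),(W 1 (L [(W 0 (L []))])),(W 0 (L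 [(W 0 (L []))])),(W 0 (L [(W 0 (L []))]))])),(W 2 (L [(W 1 (L [(W 0 (L [])),(W 0 (L []))])),(W 0 (L [(W 0 (L [])),(W 0 (L []))])),(W 0 (L [(W 0 (L []))])),(W 1 (L [(W 0 (L [])),(W 0 (L []))])),(W 0 (L [(W 0 (L []))]))])),(W 1 (L [(W 0 (L [(W 0 (L [])),(W 0 (L []))])),(W 0 (L [(W 0 (L [])),(W 0 (L []))])),(W 2 (L [(W 0 (L []))])),(W 1 (L [(W 0 (L []))])),(W 0 (L [(W 0 (L [])),(W 0 (L []))]))])),(W 1 (L [(W 0 (L [(W 0 (L []))])),(W 0 (L [(W 0 (L []))])),(W 2 (L [(W 0 (L []))])),(W 1 (L [(W 0 (L []))]))])),(W 1 (L [(W 0 (L [(W 0 (L []))])),(W 0 (L [(W 0 (L []))])),(W 2 (L [])),(W 0 (L [(W 0 (L [])),(W 0 (L []))]))]))]))"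
  by (simp add: hm_def hw0_def hw1_def)

lemma cV13: "winc 26 Hepzibah [(True,True),(False,False),(False,False),(False,False),(False,False),(False,False),(False,False),(False,False),(False,False),(False,False),(False,False),(False,False),(False,False)] (W 0 (L [(W 0 (L [(W 0 (L [(W 0 (L [(W 0 (L []))])),(W 0 (L [(W 0 (L []))])),(W 0 (L [(W 0 (L []))])),(W 0 (L [(W 0 (L []))]))])),(W 0 (L [(W 0 (L [(W 0 (L []))])),(W 0 (L [(W 0 (L []))])),(W 2 (L [(W 0 (L [(W 0 (L []))])),(W 2 (L []))])),(W 0 (L [(W 0 (L []))]))])),(W 0 (L [(W 0 (L [(W 0 (L []))])),(W 0 (L [(W 0 (L []))])),(W 0 (L [(W 0 (L []))])),(W 0 (L [(W 0 (L []))]))])),(W 2 (L [(W 0 (L [(W 0 (L []))])),(W 2 (L [(W 2 (L [])),(W 0 (L [(W 0 (L []))]))])),(W 0 (L [(W 0 (L []))])),(W 0 (L [(W 0 (L []))]))])),(W 0 (L [(W 0 (L [(W 0 (L []))])),(W 0 (L [(W 0 (L []))])),(W 0 (L [(W 0 (L []))])),(W 0 (L [(W 0 (L []))]))])),(W 3 (L [(W 0 (L [(W 0 (L []))])),(W 2 (L [(W 0 (L [(W 0 (L []))])),(W 1 (L []))])),(W 0 (L [(W 0 (L []))])),(W 0 (L [(W 0 (L []))]))])),(W 0 (L [(W 0 (L [(W 0 (L []))])),(W 0 (L [(W 0 (L []))])),(W 0 (L [(W 0 (L []))])),(W 0 (L [(W 0 (L []))]))]))])),(W 0 (L [(W 0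 (L [(W 0 (L [(W 0 (L []))])),(W 0 (L [(W 0 (L []))])),(W 0 (L [(W 0 (L []))])),(W 0 (L [(W 0 (L []))]))])),(W 0 (L [(W 0 (L [(W 0 (L []))])),(W 0 (L [(W 0 (L []))])),(W 1 (L [(W 0 (L [(W 0 (L []))])),(W 2 (L []))])),(W 0 (L [(W 0 (L []))]))])),(W 0 (L [(W 0 (L [(W 0 (L []))])),(W 0 (L [(W 0 (L []))])),(W 1 (L [(W 0 (L [(W 0 (L []))])),(W 1 (L []))])),(W 1 (L [(W 2 (L [])),(W 1 (L []))]))])),(W 0 (L [(W 0 (L [(W 0 (L []))])),(W 0 (L [(W 0 (L []))])),(W 1 (L [(W 0 (L [(W 0 (L []))])),(W 0 (L [(W 0 (L []))]))])),(W 0 (L [(W 0 (L []))]))])),(W 2 (L [(W 0 (L [(W 0 (L []))])),(W 0 (L [(W 0 (L []))])),(W 1 (L [(W 0 (L [(W 0 (L []))])),(W 1 (L []))])),(W 0 (L [(W 0 (L []))]))])),(W 2 (L [(W 0 (L [(W 0 (L []))])),(W 1 (L [(W 0 (L [(W 0 (L []))])),(W 1 (L []))])),(W 1 (L [(W 0 (L [(W 0 (L []))])),(W 1 (L []))])),(W 0 (L [(W 0 (L []))]))])),(W 3 (L [(W 0 (L [(W 0 (L []))])),(W 0 (L [(W 0 (L []))])),(W 1 (L [(W 1 (L [])),(W 1 (L []))])),(W 0 (L [(W 0 (L []))]))]))])),(W 0 (L [(W 0 (L [(W 0 (L [(W 0 (L []))])),(W 0 (L [(W 0 (L []))])),(W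 0 (L [(W 0 (L []))])),(W 0 (L [(W 0 (L []))]))])),(W 0 (L [(W 0 (L [(W 0 (L []))])),(W 0 (L [(W 0 (L []))])),(W 4 (L [(W 0 (L [(W 0 (L []))])),(W 0 (L [(W 0 (L []))]))])),(W 0 (L [(W 0 (L []))]))])),(W 0 (L [(W 0 (L [(W 0 (L []))])),(W 0 (L [(W 0 (L []))])),(W 0 (L [(W 0 (L []))])),(W 0 (L [(W 0 (L []))]))])),(W 0 (L [(W 0 (L [(W 0 (L []))])),(W 0 (L [(W 0 (L []))])),(W 4 (L [(W 0 (L [(W 0 (L []))])),(W 0 (L [(W 0 (L []))]))])),(W 0 (L [(W 0 (L []))]))])),(W 0 (L [(W 0 (L [(W 0 (L []))])),(W 0 (L [(W 0 (L []))])),(W 0 (L [(W 0 (L []))])),(W 0 (L [(W 0 (L []))]))])),(W 0 (L [(W 0 (L [(W 0 (L []))])),(W 4 (L [(W 0 (L [(W 0 (L []))])),(W 0 (L [(W 0 (L []))]))])),(W 0 (L [(W 0 (L []))])),(W 0 (L [(W 0 (L []))]))])),(W 0 (L [(W 0 (L [(W 0 (L []))])),(W 0 (L [(W 0 (L []))])),(W 0 (L [(W 0 (L []))])),(W 0 (L [(W 0 (L []))]))]))])),(W 2 (L [(W 0 (L [(W 0 (L [(W 0 (L []))])),(W 0 (L [(W 0 (L []))])),(W 0 (L [(W 0 (L []))])),(W 0 (L [(W 0 (L []))]))])),(W 2 (L [(W 0 (L [(W 0 (L []))])),(W 0 (L [(W 0 (L []))])),(W 1 (L [(W 1 (L [])),(W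 0 (L [(W 0 (L []))]))])),(W 1 (L [(W 1 (L [])),(W 0 (L [(W 0 (L []))]))]))])),(W 0 (L [(W 0 (L [(W 0 (L []))])),(W 0 (L [(W 0 (L []))])),(W 0 (L [(W 0 (L []))])),(W 0 (L [(W 0 (L []))]))])),(W 2 (L [(W 0 (L [(W 0 (L []))])),(W 1 (L [(W 2 (L [])),(W 0 (L [(W 0 (L []))]))])),(W 0 (L [(W 0 (L []))])),(W 0 (L [(W 0 (L []))]))])),(W 2 (L [(W 0 (L [(W 0 (L []))])),(W 1 (L [(W 1 (L [])),(W 0 (L [(W 0 (L []))]))])),(W 0 (L [(W 0 (L []))])),(W 0 (L [(W 0 (L []))]))])),(W 2 (L [(W 0 (L [(W 0 (L []))])),(W 1 (L [(W 0 (L [(W 0 (L []))])),(W 0 (L [(W 0 (L []))]))])),(W 0 (L [(W 0 (L []))])),(W 0 (L [(W 0 (L []))]))])),(W 0 (L [(W 0 (L [(W 0 (L []))])),(W 0 (L [(W 0 (L []))])),(W 3 (L [(W 0 (L [(W 0 (L []))])),(W 3 (L []))])),(W 0 (L [(W 0 (L []))]))]))])),(W 2 (L [(W 0 (L [(W 0 (L [(W 0 (L []))])),(W 0 (L [(W 0 (L []))])),(W 1 (L [(W 0 (L [(W 0 (L []))])),(W 2 (L []))])),(W 0 (L [(W 0 (L []))]))])),(W 0 (L [(W 0 (L [(W 0 (L []))])),(W 0 (L [(W 0 (L []))])),(W 1 (L [(W 0 (L [(W 0 (L []))])),(W 2 (L []))])),(W 0 (L [(W 0 (L []))]))])),(W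 0 (L [(W 0 (L [(W 0 (L []))])),(W 0 (L [(W 0 (L []))])),(W 0 (L [(W 0 (L []))])),(W 0 (L [(W 0 (L []))]))])),(W 1 (L [(W 1 (L [(W 2 (L [])),(W 0 (L [(W 0 (L []))]))])),(W 1 (L [(W 2 (L [])),(W 0 (L [(W 0 (L []))]))])),(W 0 (L [(W 0 (L []))])),(W 0 (L [(W 0 (L []))]))])),(W 0 (L [(W 0 (L [(W 0 (L []))])),(W 0 (L [(W 0 (L []))])),(W 0 (L [(W 0 (L []))])),(W 0 (L [(W 0 (L []))]))])),(W 1 (L [(W 1 (L [(W 0 (L [(W 0 (L []))])),(W 2 (L []))])),(W 1 (L [(W 0 (L [(W 0 (L []))])),(W 2 (L []))])),(W 0 (L [(W 0 (L []))])),(W 0 (L [(W 0 (L []))]))])),(W 0 (L [(W 0 (L [(W 0 (L []))])),(W 0 (L [(W 0 (L []))])),(W 0 (L [(W 0 (L []))])),(W 0 (L [(W 0 (L []))]))]))])),(W 3 (L [(W 0 (L [(W 0 (L [(W 0 (L []))])),(W 0 (L [(W 0 (L []))])),(W 0 (L [(W 0 (L []))])),(W 0 (L [(W 0 (L []))]))])),(W 0 (L [(W 0 (L [(W 0 (L []))])),(W 0 (L [(W 0 (L []))])),(W 1 (L [(W 0 (L [(W 0 (L []))])),(W 0 (L []))])),(W 1 (L [(W 2 (L [])),(W 0 (L []))]))])),(W 0 (L [(W 0 (L [(W 0 (L []))])),(W 0 (L [(W 0 (L []))])),(W 0 (L [(W 0 (L []))])),(W 0 (L [(W 0 (L []))]))])),(W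 2 (L [(W 0 (L [(W 0 (L []))])),(W 1 (L [(W 2 (L [])),(W 0 (L []))])),(W 0 (L [(W 0 (L []))])),(W 0 (L [(W 0 (L []))]))])),(W 2 (L [(W 0 (L [(W 0 (L []))])),(W 1 (L [(W 0 (L [(W 0 (L []))])),(W 0 (L []))])),(W 0 (L [(W 0 (L []))])),(W 0 (L [(W 0 (L []))]))])),(W 2 (L [(W 0 (L [(W 0 (L []))])),(W 1 (L [(W 0 (L [(W 0 (L []))])),(W 0 (L []))])),(W 0 (L [(W 0 (L []))])),(W 0 (L [(W 0 (L []))]))])),(W 2 (L [(W 0 (L [(W 0 (L []))])),(W 1 (L [(W 2 (L [])),(W 0 (L []))])),(W 0 (L [(W 0 (L []))])),(W 0 (L [(W 0 (L []))]))]))])),(W 5 (L [(W 0 (L [(W 0 (L [(W 0 (L []))])),(W 2 (L [(W 2 (L [])),(W 0 (L [(W 0 (L []))]))])),(W 0 (L [(W 0 (L []))])),(W 0 (L [(W 0 (L []))]))])),(W 0 (L [(W 0 (L [(W 0 (L []))])),(W 1 (L [(W 2 (L [])),(W 0 (L [(W 0 (L []))]))])),(W 1 (L [(W 2 (L [])),(W 1 (L []))])),(W 0 (L [(W 0 (L []))]))])),(W 0 (L [(W 0 (L [(W 0 (L []))])),(W 4 (L [(W 0 (L [(W 0 (L []))])),(W 0 (L [(W 0 (L []))]))])),(W 0 (L [(W 0 (L []))])),(W 0 (L [(W 0 (L []))]))])),(W 2 (L [(W 0 (L [(W 0 (L []))])),(W 1 (L [(W 2 (L [])),(W 0 (L [(W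 0 (L []))]))])),(W 0 (L [(W 0 (L []))])),(W 0 (L [(W 0 (L []))]))])),(W 2 (L [(W 1 (L [(W 2 (L [])),(W 0 (L [(W 0 (L []))]))])),(W 1 (L [(W 2 (L [])),(W 0 (L [(W 0 (L []))]))])),(W 0 (L [(W 0 (L []))])),(W 0 (L [(W 0 (L []))]))])),(W 3 (L [(W 0 (L [(W 0 (L []))])),(W 1 (L [(W 2 (L [])),(W 0 (L []))])),(W 0 (L [(W 0 (L []))])),(W 0 (L [(W 0 (L []))]))])),(W 0 (L [(W 0 (L [(W 0 (L []))])),(W 0 (L [(W 0 (L []))])),(W 0 (L [(W 0 (L []))])),(W 0 (L [(W 0 (L []))]))]))])),(W 6 (L [(W 0 (L [(W 0 (L [(W 0 (L []))])),(W 0 (L [(W 0 (L []))])),(W 0 (L [(W 0 (L []))])),(W 0 (L [(W 0 (L []))]))])),(W 0 (L [(W 0 (L [(W 0 (L []))])),(W 0 (L [(W 0 (L []))])),(W 1 (L [(W 0 (L [(W 0 (L []))])),(W 1 (L []))])),(W 0 (L [(W 0 (L []))]))])),(W 0 (L [(W 0 (L [(W 0 (L []))])),(W 0 (L [(W 0 (L []))])),(W 0 (L [(W 0 (L []))])),(W 0 (L [(W 0 (L []))]))])),(W 2 (L [(W 0 (L [(W 0 (L []))])),(W 1 (L [(W 1 (L [])),(W 0 (L [(W 0 (L []))]))])),(W 0 (L [(W 0 (L []))])),(W 0 (L [(W 0 (L []))]))])),(W 0 (L [(W 0 (L [(W 0 (L []))])),(W 0 (L [(W 0 (L []))])),(W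 0 (L [(W 0 (L []))])),(W 0 (L [(W 0 (L []))]))])),(W 3 (L [(W 0 (L [(W 0 (L []))])),(W 1 (L [(W 0 (L [(W 0 (L []))])),(W 0 (L []))])),(W 0 (L [(W 0 (L []))])),(W 0 (L [(W 0 (L []))]))])),(W 0 (L [(W 0 (L [(W 0 (L []))])),(W 0 (L [(W 0 (L []))])),(W 0 (L [(W 0 (L []))])),(W 0 (L [(W 0 (L []))]))]))])),(W 6 (L [(W 0 (L [(W 0 (L [(W 0 (L []))])),(W 2 (L [(W 0 (L [(W 0 (L []))])),(W 1 (L []))])),(W 0 (L [(W 0 (L []))])),(W 0 (L [(W 0 (L []))]))])),(W 0 (L [(W 0 (L [(W 0 (L []))])),(W 1 (L [(W 0 (L [(W 0 (L []))])),(W 1 (L []))])),(W 1 (L [(W 0 (L [(W 0 (L []))])),(W 1 (L []))])),(W 0 (L [(W 0 (L []))]))])),(W 0 (L [(W 0 (L [(W 0 (L []))])),(W 3 (L [(W 0 (L [(W 0 (L []))])),(W 0 (L [(W 0 (L []))]))])),(W 0 (L [(W 0 (L []))])),(W 0 (L [(W 0 (L []))]))])),(W 2 (L [(W 0 (L [(W 0 (L []))])),(W 1 (L [(W 0 (L [(W 0 (L []))])),(W 0 (L [(W 0 (L []))]))])),(W 0 (L [(W 0 (L []))])),(W 0 (L [(W 0 (L []))]))])),(W 2 (L [(W 1 (L [(W 0 (L [(W 0 (L []))])),(W 1 (L []))])),(W 1 (L [(W 0 (L [(W 0 (L []))])),(W 1 (L []))])),(W 0 (L [(W 0 (L []))])),(W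 0 (L [(W 0 (L []))]))])),(W 3 (L [(W 0 (L [(W 0 (L []))])),(W 1 (L [(W 0 (L [(W 0 (L []))])),(W 0 (L []))])),(W 0 (L [(W 0 (L []))])),(W 0 (L [(W 0 (L []))]))])),(W 0 (L [(W 0 (L [(W 0 (L []))])),(W 0 (L [(W 0 (L []))])),(W 0 (L [(W 0 (L []))])),(W 0 (L [(W 0 (L []))]))]))])),(W 7 (L [(W 0 (L [(W 0 (L [(W 0 (L []))])),(W 0 (L [(W 0 (L []))])),(W 0 (L [(W 0 (L []))])),(W 0 (L [(W 0 (L []))]))])),(W 0 (L [(W 0 (L [(W 0 (L []))])),(W 0 (L [(W 0 (L []))])),(W 1 (L [(W 1 (L [])),(W 1 (L []))])),(W 0 (L [(W 0 (L []))]))])),(W 0 (L [(W 0 (L [(W 0 (L []))])),(W 0 (L [(W 0 (L []))])),(W 0 (L [(W 0 (L []))])),(W 0 (L [(W 0 (L []))]))])),(W 0 (L [(W 0 (L [(W 0 (L []))])),(W 0 (L [(W 0 (L []))])),(W 3 (L [(W 2 (L [])),(W 0 (L [(W 0 (L []))]))])),(W 0 (L [(W 0 (L []))]))])),(W 0 (L [(W 0 (L [(W 0 (L []))])),(W 0 (L [(W 0 (L []))])),(W 0 (L [(W 0 (L []))])),(W 0 (L [(W 0 (L []))]))])),(W 3 (L [(W 0 (L [(W 0 (L []))])),(W 1 (L [(W 1 (L [])),(W 0 (L []))])),(W 0 (L [(W 0 (L []))])),(W 0 (L [(W 0 (L []))]))])),(W 0 (L [(W 0 (L [(W 0 (L []))])),(W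 0 (L [(W 0 (L []))])),(W 0 (L [(W 0 (L []))])),(W 0 (L [(W 0 (L []))]))]))]))]))"
  by (simp add: hm_def hw0_def hw1_def)

lemma cW13: "winc 27 Hepzibah [(False,False),(False,False),(False,False),(False,False),(False,False),(False,False),(False,False),(False,False),(False,False),(False,False),(False,False),(False,False),(False,False)] (W 0 (L [(W 0 (L [(W 1 (L [(W 0 (L [(W 5 (L [])),(W 5 (L []))])),(W 0 (L [(W 4 (L [])),(W 2 (L []))])),(W 0 (L [(W 3 (L [])),(W 2 (L []))])),(W 0 (L [(W 5 (L [])),(W 2 (L []))])),(W 0 (L [(W 5 (L [])),(W 2 (L []))]))])),(W 0 (L [(W 0 (L [(W 5 (L [])),(W 5 (L []))])),(W 0 (L [(W 4 (L [])),(W 2 (L []))])),(W 0 (L [(W 3 (L [])),(W 2 (L []))])),(W 0 (L [(W 5 (L [])),(W 2 (L []))])),(W 0 (L [(W 5 (L [])),(W 2 (L []))]))])),(W 2 (L [(W 0 (L [(W 2 (L [])),(W 0 (L [(W 0 (L []))]))])),(W 0 (L [(W 2 (L [])),(W 2 (L []))])),(W 0 (L [(W 5 (L [])),(W 5 (L []))])),(W 0 (L [(W 5 (L [])),(W 4 (L []))])),(W 0 (L [(W 5 (L [])),(W 4 (L []))]))])),(W 0 (L [(W 0 (L [(W 5 (L [])),(W 5 (L []))])),(W 0 (L [(W 5 (L [])),(W 4 (L []))])),(W 0 (L [(W 0 (L [(W 0 (L []))])),(W 4 (L []))])),(W 0 (L [(W 5 (L [])),(W 4 (L []))])),(W 0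 (L [(W 5 (L [])),(W 4 (L []))]))])),(W 2 (L [(W 0 (L [(W 4 (L [])),(W 2 (L []))])),(W 0 (L [(W 4 (L [])),(W 2 (L []))])),(W 1 (L [(W 2 (L [])),(W 2 (L []))])),(W 0 (L [(W 6 (L [])),(W 0 (L [(W 0 (L []))]))])),(W 1 (L [(W 2 (L [])),(W 2 (L []))]))])),(W 2 (L [(W 0 (L [(W 3 (L [])),(W 2 (L []))])),(W 0 (L [(W 3 (L [])),(W 2 (L []))])),(W 1 (L [(W 2 (L [])),(W 2 (L []))])),(W 0 (L [(W 6 (L [])),(W 6 (L []))])),(W 0 (L [(W 0 (L [(W 0 (L []))])),(W 6 (L []))]))])),(W 4 (L [(W 0 (L [(W 4 (L [])),(W 3 (L []))])),(W 0 (L [(W 5 (L [])),(W 2 (L []))])),(W 0 (L [(W 5 (L [])),(W 4 (L []))])),(W 0 (L [(W 5 (L [])),(W 4 (L []))])),(W 0 (L [(W 4 (L [])),(W 4 (L []))]))])),(W 4 (L [(W 0 (L [(W 4 (L [])),(W 3 (L []))])),(W 0 (L [(W 5 (L [])),(W 2 (L []))])),(W 0 (L [(W 5 (L [])),(W 4 (L []))])),(W 0 (L [(W 5 (L [])),(W 4 (L []))])),(W 0 (L [(W 4 (L [])),(W 4 (L []))]))]))])),(W 0 (L [(W 1 (L [(W 0 (L [(W 5 (L [])),(W 5 (L []))])),(W 0 (L [(W 4 (L [])),(W 2 (L []))])),(W 0 (L [(W 3 (L [])),(W 2 (L []))])),(W 0 (L [(W 5 (L [])),(W 2 (L []))])),(W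 0 (L [(W 5 (L [])),(W 2 (L []))]))])),(W 0 (L [(W 0 (L [(W 5 (L [])),(W 5 (L []))])),(W 0 (L [(W 4 (L [])),(W 1 (L []))])),(W 0 (L [(W 3 (L [])),(W 1 (L []))])),(W 0 (L [(W 5 (L [])),(W 1 (L []))])),(W 0 (L [(W 5 (L [])),(W 1 (L []))]))])),(W 0 (L [(W 0 (L [(W 5 (L [])),(W 2 (L []))])),(W 0 (L [(W 5 (L [])),(W 1 (L []))])),(W 0 (L [(W 2 (L [])),(W 1 (L []))])),(W 1 (L [(W 2 (L [(W 0 (L []))])),(W 1 (L [(W 0 (L []))])),(W 1 (L [(W 0 (L []))]))])),(W 0 (L [(W 2 (L [])),(W 1 (L []))]))])),(W 0 (L [(W 0 (L [(W 5 (L [])),(W 5 (L []))])),(W 0 (L [(W 5 (L [])),(W 1 (L []))])),(W 0 (L [(W 0 (L [(W 0 (L []))])),(W 1 (L []))])),(W 0 (L [(W 5 (L [])),(W 1 (L []))])),(W 0 (L [(W 5 (L [])),(W 1 (L []))]))])),(W 0 (L [(W 0 (L [(W 5 (L [])),(W 4 (L []))])),(W 0 (L [(W 5 (L [])),(W 1 (L []))])),(W 0 (L [(W 4 (L [])),(W 1 (L []))])),(W 1 (L [(W 3 (L [(W 0 (L []))])),(W 3 (L [(W 0 (L []))])),(W 3 (L [(W 0 (L []))]))])),(W 0 (L [(W 4 (L [])),(W 1 (L []))]))])),(W 2 (L [(W 1 (L [(W 2 (L [])),(W 2 (L []))])),(W 0 (L [(W 2 (L [])),(W 1 (L []))])),(W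 0 (L [(W 2 (L [])),(W 1 (L []))])),(W 0 (L [(W 6 (L [])),(W 1 (L []))])),(W 0 (L [(W 0 (L [(W 0 (L []))])),(W 1 (L []))]))])),(W 0 (L [(W 0 (L [(W 6 (L [])),(W 6 (L []))])),(W 0 (L [(W 5 (L [])),(W 1 (L []))])),(W 1 (L [(W 3 (L [(W 0 (L []))])),(W 3 (L [(W 0 (L []))])),(W 3 (L [(W 0 (L []))]))])),(W 0 (L [(W 6 (L [])),(W 1 (L []))])),(W 0 (L [(W 6 (L [])),(W 1 (L []))]))])),(W 4 (L [(W 0 (L [(W 4 (L [])),(W 4 (L []))])),(W 0 (L [(W 3 (L [])),(W 1 (L []))])),(W 0 (L [(W 2 (L [])),(W 1 (L []))])),(W 0 (L [(W 4 (L [])),(W 1 (L []))])),(W 0 (L [(W 4 (L [])),(W 1 (L []))]))]))])),(W 0 (L [(W 1 (L [(W 0 (L [(W 6 (L [])),(W 6 (L []))])),(W 0 (L [(W 5 (L [])),(W 3 (L []))])),(W 0 (L [(W 4 (L [])),(W 3 (L []))])),(W 0 (L [(W 6 (L [])),(W 3 (L []))])),(W 0 (L [(W 6 (L [])),(W 3 (L []))]))])),(W 0 (L [(W 0 (L [(W 6 (L [])),(W 6 (L []))])),(W 0 (L [(W 5 (L [])),(W 0 (L [(W 0 (L []))]))])),(W 0 (L [(W 4 (L [])),(W 0 (L [(W 0 (L []))]))])),(W 0 (L [(W 6 (L [])),(W 0 (L [(W 0 (L []))]))])),(W 0 (L [(W 6 (L [])),(W 0 (L [(W 0 (L []))]))]))])),(W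 0 (L [(W 0 (L [(W 5 (L [])),(W 5 (L []))])),(W 0 (L [(W 5 (L [])),(W 0 (L [(W 0 (L []))]))])),(W 0 (L [(W 5 (L [])),(W 0 (L [(W 0 (L []))]))])),(W 0 (L [(W 5 (L [])),(W 5 (L []))])),(W 1 (L [(W 5 (L [])),(W 4 (L []))]))])),(W 0 (L [(W 0 (L [(W 5 (L [])),(W 5 (L []))])),(W 0 (L [(W 5 (L [])),(W 4 (L []))])),(W 0 (L [(W 0 (L [(W 0 (L []))])),(W 4 (L []))])),(W 0 (L [(W 5 (L [])),(W 4 (L []))])),(W 0 (L [(W 5 (L [])),(W 4 (L []))]))])),(W 3 (L [(W 0 (L [(W 5 (L [])),(W 4 (L []))])),(W 0 (L [(W 5 (L [])),(W 0 (L [(W 0 (L []))]))])),(W 0 (L [(W 5 (L [])),(W 0 (L [(W 0 (L []))]))])),(W 0 (L [(W 5 (L [])),(W 4 (L []))])),(W 1 (L [(W 4 (L [])),(W 3 (L []))]))])),(W 1 (L [(W 0 (L [(W 6 (L [])),(W 0 (L [(W 0 (L []))]))])),(W 0 (L [(W 0 (L [(W 0 (L []))])),(W 3 (L []))])),(W 0 (L [(W 4 (L [])),(W 3 (L []))])),(W 0 (L [(W 6 (L [])),(W 3 (L []))])),(W 0 (L [(W 0 (L [(W 0 (L []))])),(W 3 (L []))]))])),(W 0 (L [(W 0 (L [(W 5 (L [])),(W 5 (L []))])),(W 0 (L [(W 5 (L [])),(W 4 (L []))])),(W 0 (L [(W 6 (L [])),(W 0 (L [(W 0 (L []))]))])),(W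 0 (L [(W 6 (L [])),(W 6 (L []))])),(W 1 (L [(W 5 (L [])),(W 4 (L []))]))])),(W 1 (L [(W 1 (L [(W 5 (L [])),(W 4 (L []))])),(W 0 (L [(W 5 (L [])),(W 3 (L []))])),(W 0 (L [(W 4 (L [])),(W 3 (L []))])),(W 0 (L [(W 0 (L [(W 0 (L []))])),(W 3 (L []))])),(W 0 (L [(W 6 (L [])),(W 3 (L []))]))]))])),(W 0 (L [(W 1 (L [(W 0 (L [(W 6 (L [])),(W 6 (L []))])),(W 0 (L [(W 5 (L [])),(W 3 (L []))])),(W 0 (L [(W 4 (L [])),(W 3 (L []))])),(W 0 (L [(W 6 (L [])),(W 3 (L []))])),(W 0 (L [(W 6 (L [])),(W 3 (L []))]))])),(W 0 (L [(W 0 (L [(W 6 (L [])),(W 6 (L []))])),(W 0 (L [(W 5 (L [])),(W 3 (L []))])),(W 0 (L [(W 4 (L [])),(W 3 (L []))])),(W 0 (L [(W 6 (L [])),(W 3 (L []))])),(W 0 (L [(W 6 (L [])),(W 3 (L []))]))])),(W 0 (L [(W 0 (L [(W 6 (L [])),(W 0 (L [(W 0 (L []))]))])),(W 0 (L [(W 6 (L [])),(W 3 (L []))])),(W 0 (L [(W 0 (L [(W 0 (L []))])),(W 3 (L []))])),(W 3 (L [(W 3 (L [(W 0 (L []))])),(W 3 (L [(W 0 (L []))])),(W 3 (L [(W 0 (L []))]))])),(W 0 (L [(W 0 (L [(W 0 (L []))])),(W 3 (L []))]))])),(W 0 (L [(W 0 (L [(W 5 (L [])),(W 5 (L []))])),(W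 0 (L [(W 5 (L [])),(W 3 (L []))])),(W 0 (L [(W 0 (L [(W 0 (L []))])),(W 3 (L []))])),(W 0 (L [(W 5 (L [])),(W 3 (L []))])),(W 0 (L [(W 5 (L [])),(W 3 (L []))]))])),(W 0 (L [(W 0 (L [(W 5 (L [])),(W 4 (L []))])),(W 0 (L [(W 5 (L [])),(W 3 (L []))])),(W 0 (L [(W 4 (L [])),(W 3 (L []))])),(W 3 (L [(W 3 (L [(W 0 (L []))])),(W 3 (L [(W 0 (L []))])),(W 3 (L [(W 0 (L []))]))])),(W 0 (L [(W 4 (L [])),(W 3 (L []))]))])),(W 3 (L [(W 1 (L [(W 4 (L [])),(W 3 (L []))])),(W 0 (L [(W 4 (L [])),(W 3 (L []))])),(W 0 (L [(W 0 (L [(W 0 (L []))])),(W 3 (L []))])),(W 0 (L [(W 0 (L [(W 0 (L []))])),(W 3 (L []))])),(W 0 (L [(W 4 (L [])),(W 3 (L []))]))])),(W 0 (L [(W 0 (L [(W 6 (L [])),(W 6 (L []))])),(W 0 (L [(W 5 (L [])),(W 3 (L []))])),(W 3 (L [(W 3 (L [(W 0 (L []))])),(W 3 (L [(W 0 (L []))])),(W 3 (L [(W 0 (L []))]))])),(W 0 (L [(W 6 (L [])),(W 3 (L []))])),(W 0 (L [(W 6 (L [])),(W 3 (L []))]))])),(W 0 (L [(W 1 (L [(W 5 (L [])),(W 4 (L []))])),(W 0 (L [(W 5 (L [])),(W 3 (L []))])),(W 0 (L [(W 4 (L [])),(W 3 (L []))])),(W 0 (L [(W 0 (L [(W 0 (L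 []))])),(W 3 (L []))])),(W 0 (L [(W 6 (L [])),(W 3 (L []))]))]))])),(W 2 (L [(W 0 (L [(W 0 (L [(W 5 (L [])),(W 5 (L []))])),(W 0 (L [(W 4 (L [])),(W 1 (L []))])),(W 0 (L [(W 3 (L [])),(W 1 (L []))])),(W 0 (L [(W 5 (L [])),(W 1 (L []))])),(W 0 (L [(W 5 (L [])),(W 1 (L []))]))])),(W 0 (L [(W 0 (L [(W 5 (L [])),(W 5 (L []))])),(W 0 (L [(W 4 (L [])),(W 1 (L []))])),(W 0 (L [(W 3 (L [])),(W 1 (L []))])),(W 0 (L [(W 5 (L [])),(W 1 (L []))])),(W 0 (L [(W 5 (L [])),(W 1 (L []))]))])),(W 1 (L [(W 0 (L [(W 5 (L [])),(W 1 (L []))])),(W 0 (L [(W 5 (L [])),(W 1 (L []))])),(W 1 (L [(W 1 (L [])),(W 1 (L []))])),(W 0 (L [(W 6 (L [])),(W 6 (L []))])),(W 1 (L [(W 1 (L [])),(W 1 (L []))]))])),(W 1 (L [(W 0 (L [(W 0 (L [(W 0 (L []))])),(W 1 (L []))])),(W 0 (L [(W 0 (L [(W 0 (L []))])),(W 1 (L []))])),(W 0 (L [(W 6 (L [])),(W 6 (L []))])),(W 0 (L [(W 6 (L [])),(W 0 (L [(W 0 (L []))]))])),(W 0 (L [(W 6 (L [])),(W 0 (L [(W 0 (L []))]))]))])),(W 1 (L [(W 0 (L [(W 4 (L [])),(W 1 (L []))])),(W 0 (L [(W 4 (L [])),(W 1 (L []))])),(W 1 (L [(W 1 (L [])),(W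 1 (L []))])),(W 0 (L [(W 6 (L [])),(W 0 (L [(W 0 (L []))]))])),(W 1 (L [(W 1 (L [])),(W 1 (L []))]))])),(W 1 (L [(W 0 (L [(W 3 (L [])),(W 1 (L []))])),(W 0 (L [(W 3 (L [])),(W 1 (L []))])),(W 1 (L [(W 1 (L [])),(W 1 (L []))])),(W 0 (L [(W 6 (L [])),(W 6 (L []))])),(W 0 (L [(W 0 (L [(W 0 (L []))])),(W 6 (L []))]))])),(W 1 (L [(W 0 (L [(W 5 (L [])),(W 1 (L []))])),(W 0 (L [(W 5 (L [])),(W 1 (L []))])),(W 0 (L [(W 6 (L [])),(W 0 (L [(W 0 (L []))]))])),(W 0 (L [(W 6 (L [])),(W 6 (L []))])),(W 1 (L [(W 1 (L [])),(W 1 (L []))]))])),(W 1 (L [(W 0 (L [(W 5 (L [])),(W 1 (L []))])),(W 0 (L [(W 5 (L [])),(W 1 (L []))])),(W 1 (L [(W 1 (L [])),(W 1 (L []))])),(W 0 (L [(W 0 (L [(W 0 (L []))])),(W 6 (L []))])),(W 1 (L [(W 1 (L [])),(W 1 (L []))]))]))])),(W 3 (L [(W 2 (L [(W 0 (L [(W 2 (L [])),(W 1 (L []))])),(W 0 (L [(W 2 (L [])),(W 0 (L [(W 0 (L []))]))])),(W 0 (L [(W 5 (L [])),(W 5 (L []))])),(W 0 (L [(W 5 (L [])),(W 4 (L []))])),(W 0 (L [(W 5 (L [])),(W 4 (L []))]))])),(W 0 (L [(W 0 (L [(W 5 (L [])),(W 1 (L []))])),(W 0 (L [(W 5 (L [])),(W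 1 (L []))])),(W 0 (L [(W 1 (L [])),(W 1 (L []))])),(W 1 (L [(W 2 (L [(W 0 (L []))])),(W 0 (L [(W 0 (L []))])),(W 0 (L [(W 0 (L []))]))])),(W 0 (L [(W 1 (L [])),(W 1 (L []))]))])),(W 2 (L [(W 0 (L [(W 2 (L [])),(W 0 (L [(W 0 (L []))]))])),(W 0 (L [(W 2 (L [])),(W 1 (L []))])),(W 0 (L [(W 5 (L [])),(W 5 (L []))])),(W 0 (L [(W 5 (L [])),(W 4 (L []))])),(W 0 (L [(W 5 (L [])),(W 4 (L []))]))])),(W 2 (L [(W 0 (L [(W 5 (L [])),(W 5 (L []))])),(W 0 (L [(W 1 (L [])),(W 1 (L []))])),(W 0 (L [(W 5 (L [])),(W 5 (L []))])),(W 0 (L [(W 5 (L [])),(W 3 (L []))])),(W 0 (L [(W 5 (L [])),(W 3 (L []))]))])),(W 2 (L [(W 0 (L [(W 5 (L [])),(W 0 (L [(W 0 (L []))]))])),(W 1 (L [(W 2 (L [(W 0 (L []))])),(W 0 (L [(W 0 (L []))])),(W 0 (L [(W 0 (L []))]))])),(W 0 (L [(W 5 (L [])),(W 0 (L [(W 0 (L []))]))])),(W 0 (L [(W 5 (L [])),(W 3 (L []))])),(W 0 (L [(W 0 (L [(W 0 (L []))])),(W 3 (L []))]))])),(W 2 (L [(W 0 (L [(W 5 (L [])),(W 0 (L [(W 0 (L []))]))])),(W 0 (L [(W 1 (L [])),(W 1 (L []))])),(W 0 (L [(W 5 (L [])),(W 0 (L [(W 0 (L []))]))])),(W 0 (L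 [(W 5 (L [])),(W 3 (L []))])),(W 0 (L [(W 0 (L [(W 0 (L []))])),(W 3 (L []))]))])),(W 2 (L [(W 0 (L [(W 5 (L [])),(W 5 (L []))])),(W 1 (L [(W 2 (L [(W 0 (L []))])),(W 0 (L [(W 0 (L []))])),(W 0 (L [(W 0 (L []))]))])),(W 0 (L [(W 5 (L [])),(W 5 (L []))])),(W 0 (L [(W 5 (L [])),(W 3 (L []))])),(W 0 (L [(W 5 (L [])),(W 3 (L []))]))])),(W 0 (L [(W 1 (L [(W 5 (L [])),(W 4 (L []))])),(W 0 (L [(W 5 (L [])),(W 3 (L []))])),(W 0 (L [(W 0 (L [(W 0 (L []))])),(W 3 (L []))])),(W 0 (L [(W 0 (L [(W 0 (L []))])),(W 3 (L []))])),(W 0 (L [(W 5 (L [])),(W 3 (L []))]))]))])),(W 4 (L [(W 0 (L [(W 0 (L [(W 4 (L [])),(W 4 (L []))])),(W 0 (L [(W 4 (L [])),(W 2 (L []))])),(W 0 (L [(W 0 (L [(W 0 (L []))])),(W 2 (L []))])),(W 0 (L [(W 4 (L [])),(W 2 (L []))])),(W 0 (L [(W 4 (L [])),(W 2 (L []))]))])),(W 0 (L [(W 0 (L [(W 5 (L [])),(W 5 (L []))])),(W 0 (L [(W 5 (L [])),(W 1 (L []))])),(W 0 (L [(W 0 (L [(W 0 (L []))])),(W 1 (L []))])),(W 0 (L [(W 5 (L [])),(W 1 (L []))])),(W 0 (L [(W 5 (L [])),(W 1 (L []))]))])),(W 0 (L [(W 0 (L [(W 5 (L [])),(W 5 (L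 []))])),(W 0 (L [(W 5 (L [])),(W 3 (L []))])),(W 0 (L [(W 0 (L [(W 0 (L []))])),(W 3 (L []))])),(W 0 (L [(W 5 (L [])),(W 3 (L []))])),(W 0 (L [(W 5 (L [])),(W 3 (L []))]))])),(W 0 (L [(W 0 (L [(W 5 (L [])),(W 5 (L []))])),(W 0 (L [(W 5 (L [])),(W 3 (L []))])),(W 0 (L [(W 0 (L [(W 0 (L []))])),(W 3 (L []))])),(W 0 (L [(W 5 (L [])),(W 3 (L []))])),(W 0 (L [(W 5 (L [])),(W 3 (L []))]))])),(W 3 (L [(W 0 (L [(W 4 (L [])),(W 2 (L []))])),(W 0 (L [(W 5 (L [])),(W 1 (L []))])),(W 0 (L [(W 5 (L [])),(W 3 (L []))])),(W 0 (L [(W 5 (L [])),(W 3 (L []))])),(W 0 (L [(W 3 (L [])),(W 3 (L []))]))])),(W 3 (L [(W 0 (L [(W 0 (L [(W 0 (L []))])),(W 2 (L []))])),(W 0 (L [(W 0 (L [(W 0 (L []))])),(W 1 (L []))])),(W 0 (L [(W 0 (L [(W 0 (L []))])),(W 3 (L []))])),(W 0 (L [(W 0 (L [(W 0 (L []))])),(W 3 (L []))])),(W 0 (L [(W 3 (L [])),(W 3 (L []))]))])),(W 3 (L [(W 0 (L [(W 4 (L [])),(W 2 (L []))])),(W 0 (L [(W 5 (L [])),(W 1 (L []))])),(W 0 (L [(W 5 (L [])),(W 3 (L []))])),(W 0 (L [(W 5 (L [])),(W 3 (L []))])),(W 0 (L [(W 3 (L [])),(W 3 (L []))]))])),(W 3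 (L [(W 0 (L [(W 4 (L [])),(W 2 (L []))])),(W 0 (L [(W 5 (L [])),(W 1 (L []))])),(W 0 (L [(W 5 (L [])),(W 3 (L []))])),(W 0 (L [(W 5 (L [])),(W 3 (L []))])),(W 0 (L [(W 3 (L [])),(W 3 (L []))]))]))])),(W 6 (L [(W 0 (L [(W 0 (L [(W 4 (L [])),(W 3 (L []))])),(W 0 (L [(W 4 (L [])),(W 2 (L []))])),(W 0 (L [(W 5 (L [])),(W 0 (L [(W 0 (L []))]))])),(W 0 (L [(W 5 (L [])),(W 4 (L []))])),(W 1 (L [(W 3 (L [])),(W 2 (L []))]))])),(W 0 (L [(W 0 (L [(W 5 (L [])),(W 4 (L []))])),(W 0 (L [(W 4 (L [])),(W 1 (L []))])),(W 1 (L [(W 2 (L [(W 0 (L []))])),(W 1 (L [(W 0 (L []))])),(W 1 (L [(W 0 (L []))]))])),(W 0 (L [(W 5 (L [])),(W 1 (L []))])),(W 0 (L [(W 4 (L [])),(W 1 (L []))]))])),(W 0 (L [(W 0 (L [(W 5 (L [])),(W 4 (L []))])),(W 0 (L [(W 5 (L [])),(W 0 (L [(W 0 (L []))]))])),(W 0 (L [(W 5 (L [])),(W 0 (L [(W 0 (L []))]))])),(W 0 (L [(W 5 (L [])),(W 4 (L []))])),(W 1 (L [(W 4 (L [])),(W 3 (L []))]))])),(W 2 (L [(W 0 (L [(W 4 (L [])),(W 3 (L []))])),(W 1 (L [(W 1 (L [(W 0 (L []))])),(W 2 (L [(W 0 (L []))])),(W 1 (L [(W 0 (L []))]))])),(W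 0 (L [(W 5 (L [])),(W 4 (L []))])),(W 0 (L [(W 5 (L [])),(W 3 (L []))])),(W 0 (L [(W 4 (L [])),(W 3 (L []))]))])),(W 3 (L [(W 0 (L [(W 4 (L [])),(W 2 (L []))])),(W 0 (L [(W 4 (L [])),(W 1 (L []))])),(W 0 (L [(W 5 (L [])),(W 0 (L [(W 0 (L []))]))])),(W 0 (L [(W 5 (L [])),(W 3 (L []))])),(W 1 (L [(W 2 (L [])),(W 1 (L []))]))])),(W 3 (L [(W 0 (L [(W 5 (L [])),(W 0 (L [(W 0 (L []))]))])),(W 1 (L [(W 2 (L [(W 0 (L []))])),(W 0 (L [(W 0 (L []))])),(W 0 (L [(W 0 (L []))]))])),(W 0 (L [(W 5 (L [])),(W 0 (L [(W 0 (L []))]))])),(W 0 (L [(W 5 (L [])),(W 3 (L []))])),(W 0 (L [(W 0 (L [(W 0 (L []))])),(W 3 (L []))]))])),(W 4 (L [(W 0 (L [(W 4 (L [])),(W 2 (L []))])),(W 0 (L [(W 5 (L [])),(W 1 (L []))])),(W 0 (L [(W 5 (L [])),(W 3 (L []))])),(W 0 (L [(W 5 (L [])),(W 3 (L []))])),(W 0 (L [(W 3 (L [])),(W 3 (L []))]))])),(W 4 (L [(W 0 (L [(W 3 (L [])),(W 2 (L []))])),(W 0 (L [(W 4 (L [])),(W 1 (L []))])),(W 0 (L [(W 4 (L [])),(W 3 (L []))])),(W 0 (L [(W 4 (L [])),(W 3 (L []))])),(W 0 (L [(W 3 (L [])),(W 3 (L []))]))]))])),(W 2 (L [(W 2 (L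 [(W 1 (L [(W 2 (L [])),(W 2 (L []))])),(W 0 (L [(W 2 (L [])),(W 1 (L []))])),(W 0 (L [(W 2 (L [])),(W 1 (L []))])),(W 0 (L [(W 6 (L [])),(W 1 (L []))])),(W 0 (L [(W 0 (L [(W 0 (L []))])),(W 1 (L []))]))])),(W 2 (L [(W 1 (L [(W 2 (L [])),(W 2 (L []))])),(W 0 (L [(W 2 (L [])),(W 1 (L []))])),(W 0 (L [(W 2 (L [])),(W 1 (L []))])),(W 0 (L [(W 6 (L [])),(W 1 (L []))])),(W 0 (L [(W 0 (L [(W 0 (L []))])),(W 1 (L []))]))])),(W 1 (L [(W 0 (L [(W 3 (L [])),(W 1 (L []))])),(W 0 (L [(W 3 (L [])),(W 1 (L []))])),(W 1 (L [(W 1 (L [])),(W 1 (L []))])),(W 0 (L [(W 6 (L [])),(W 6 (L []))])),(W 0 (L [(W 0 (L [(W 0 (L []))])),(W 6 (L []))]))])),(W 1 (L [(W 0 (L [(W 2 (L [])),(W 1 (L []))])),(W 0 (L [(W 2 (L [])),(W 1 (L []))])),(W 1 (L [(W 1 (L [])),(W 1 (L []))])),(W 0 (L [(W 6 (L [])),(W 5 (L []))])),(W 0 (L [(W 0 (L [(W 0 (L []))])),(W 5 (L []))]))])),(W 1 (L [(W 0 (L [(W 0 (L [(W 0 (L []))])),(W 1 (L []))])),(W 0 (L [(W 0 (L [(W 0 (L []))])),(W 1 (L []))])),(W 1 (L [(W 1 (L [])),(W 1 (L []))])),(W 0 (L [(W 7 (L [])),(W 0 (L [(W 0 (L []))]))])),(W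 0 (L [(W 0 (L [(W 0 (L []))])),(W 0 (L [(W 0 (L []))]))]))])),(W 1 (L [(W 0 (L [(W 4 (L [])),(W 1 (L []))])),(W 0 (L [(W 4 (L [])),(W 1 (L []))])),(W 1 (L [(W 1 (L [])),(W 1 (L []))])),(W 0 (L [(W 7 (L [])),(W 7 (L []))])),(W 0 (L [(W 0 (L [(W 0 (L []))])),(W 7 (L []))]))])),(W 3 (L [(W 0 (L [(W 6 (L [])),(W 1 (L []))])),(W 0 (L [(W 6 (L [])),(W 1 (L []))])),(W 0 (L [(W 6 (L [])),(W 5 (L []))])),(W 0 (L [(W 6 (L [])),(W 5 (L []))])),(W 0 (L [(W 5 (L [])),(W 5 (L []))]))])),(W 3 (L [(W 0 (L [(W 0 (L [(W 0 (L []))])),(W 1 (L []))])),(W 0 (L [(W 0 (L [(W 0 (L []))])),(W 1 (L []))])),(W 0 (L [(W 0 (L [(W 0 (L []))])),(W 5 (L []))])),(W 0 (L [(W 0 (L [(W 0 (L []))])),(W 5 (L []))])),(W 0 (L [(W 5 (L [])),(W 5 (L []))]))]))])),(W 7 (L [(W 0 (L [(W 0 (L [(W 4 (L [])),(W 3 (L []))])),(W 0 (L [(W 5 (L [])),(W 2 (L []))])),(W 0 (L [(W 5 (L [])),(W 4 (L []))])),(W 0 (L [(W 5 (L [])),(W 4 (L []))])),(W 0 (L [(W 4 (L [])),(W 4 (L []))]))])),(W 0 (L [(W 0 (L [(W 5 (L [])),(W 4 (L []))])),(W 0 (L [(W 5 (L [])),(W 1 (L []))])),(W 1 (L [(W 1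 (L [(W 0 (L []))])),(W 1 (L [(W 0 (L []))])),(W 1 (L [(W 0 (L []))]))])),(W 0 (L [(W 5 (L [])),(W 1 (L []))])),(W 0 (L [(W 4 (L [])),(W 1 (L []))]))])),(W 0 (L [(W 0 (L [(W 5 (L [])),(W 4 (L []))])),(W 0 (L [(W 6 (L [])),(W 0 (L [(W 0 (L []))]))])),(W 0 (L [(W 5 (L [])),(W 4 (L []))])),(W 0 (L [(W 5 (L [])),(W 4 (L []))])),(W 0 (L [(W 4 (L [])),(W 4 (L []))]))])),(W 0 (L [(W 0 (L [(W 5 (L [])),(W 4 (L []))])),(W 0 (L [(W 6 (L [])),(W 3 (L []))])),(W 3 (L [(W 2 (L [(W 0 (L []))])),(W 3 (L [(W 0 (L []))])),(W 2 (L [(W 0 (L []))]))])),(W 0 (L [(W 5 (L [])),(W 3 (L []))])),(W 0 (L [(W 4 (L [])),(W 3 (L []))]))])),(W 2 (L [(W 0 (L [(W 5 (L [])),(W 1 (L []))])),(W 0 (L [(W 5 (L [])),(W 1 (L []))])),(W 0 (L [(W 6 (L [])),(W 5 (L []))])),(W 0 (L [(W 6 (L [])),(W 0 (L [(W 0 (L []))]))])),(W 1 (L [(W 1 (L [])),(W 1 (L []))]))])),(W 0 (L [(W 0 (L [(W 5 (L [])),(W 4 (L []))])),(W 3 (L [(W 2 (L [(W 0 (L []))])),(W 3 (L [(W 0 (L []))])),(W 2 (L [(W 0 (L []))]))])),(W 0 (L [(W 6 (L [])),(W 5 (L []))])),(W 0 (L [(W 6 (L [])),(W 5 (L []))])),(W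 0 (L [(W 5 (L [])),(W 5 (L []))]))])),(W 4 (L [(W 0 (L [(W 4 (L [])),(W 2 (L []))])),(W 0 (L [(W 5 (L [])),(W 1 (L []))])),(W 0 (L [(W 5 (L [])),(W 3 (L []))])),(W 0 (L [(W 5 (L [])),(W 3 (L []))])),(W 0 (L [(W 3 (L [])),(W 3 (L []))]))])),(W 1 (L [(W 0 (L [(W 4 (L [])),(W 4 (L []))])),(W 0 (L [(W 3 (L [])),(W 1 (L []))])),(W 0 (L [(W 2 (L [])),(W 1 (L []))])),(W 0 (L [(W 4 (L [])),(W 1 (L []))])),(W 0 (L [(W 4 (L [])),(W 1 (L []))]))]))])),(W 8 (L [(W 1 (L [(W 0 (L [(W 4 (L [])),(W 4 (L []))])),(W 0 (L [(W 3 (L [])),(W 1 (L []))])),(W 0 (L [(W 2 (L [])),(W 1 (L []))])),(W 0 (L [(W 4 (L [])),(W 1 (L []))])),(W 0 (L [(W 4 (L [])),(W 1 (L []))]))])),(W 0 (L [(W 0 (L [(W 4 (L [])),(W 4 (L []))])),(W 0 (L [(W 3 (L [])),(W 1 (L []))])),(W 0 (L [(W 2 (L [])),(W 1 (L []))])),(W 0 (L [(W 4 (L [])),(W 1 (L []))])),(W 0 (L [(W 4 (L [])),(W 1 (L []))]))])),(W 2 (L [(W 0 (L [(W 1 (L [])),(W 0 (L [(W 0 (L []))]))])),(W 0 (L [(W 1 (L [])),(W 1 (L []))])),(W 0 (L [(W 4 (L [])),(W 4 (L []))])),(W 0 (L [(W 4 (L [])),(W 3 (L []))])),(W 0 (L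 [(W 4 (L [])),(W 3 (L []))]))])),(W 0 (L [(W 0 (L [(W 4 (L [])),(W 4 (L []))])),(W 0 (L [(W 4 (L [])),(W 3 (L []))])),(W 0 (L [(W 0 (L [(W 0 (L []))])),(W 3 (L []))])),(W 0 (L [(W 4 (L [])),(W 3 (L []))])),(W 0 (L [(W 4 (L [])),(W 3 (L []))]))])),(W 2 (L [(W 0 (L [(W 3 (L [])),(W 1 (L []))])),(W 0 (L [(W 3 (L [])),(W 1 (L []))])),(W 1 (L [(W 1 (L [])),(W 1 (L []))])),(W 0 (L [(W 5 (L [])),(W 0 (L [(W 0 (L []))]))])),(W 1 (L [(W 1 (L [])),(W 1 (L []))]))])),(W 2 (L [(W 0 (L [(W 2 (L [])),(W 1 (L []))])),(W 0 (L [(W 2 (L [])),(W 1 (L []))])),(W 1 (L [(W 1 (L [])),(W 1 (L []))])),(W 0 (L [(W 5 (L [])),(W 5 (L []))])),(W 0 (L [(W 0 (L [(W 0 (L []))])),(W 5 (L []))]))])),(W 4 (L [(W 0 (L [(W 3 (L [])),(W 2 (L []))])),(W 0 (L [(W 4 (L [])),(W 1 (L []))])),(W 0 (L [(W 4 (L [])),(W 3 (L []))])),(W 0 (L [(W 4 (L [])),(W 3 (L []))])),(W 0 (L [(W 3 (L [])),(W 3 (L []))]))])),(W 4 (L [(W 0 (L [(W 3 (L [])),(W 2 (L []))])),(W 0 (L [(W 4 (L [])),(W 1 (L []))])),(W 0 (L [(W 4 (L [])),(W 3 (L []))])),(W 0 (L [(W 4 (L [])),(W 3 (L []))])),(W 0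 (L [(W 3 (L [])),(W 3 (L []))]))]))]))]))"
  by (simp add: hm_def hw0_def hw1_def)

theorem mainTheorem14:
  shows "second_player_win 5 \<and> second_player_win 9 \<and> hepzibah_win 13"
proof -
  have ev5: "[(True,True),(False,False),(False,False),(False,False),(False,False)] = (True,True) # replicate 4 (False,False)" by (simp add: numeral_eq_Suc)
  have v5: "wins_fuel 5 10 Hepzibah {(0,0),(1,0)}" using from_cert[OF cV5] unfolding ev5 absc_V0 by simp
  have nv5: "\<not> first_player_wins 5 Vera" unfolding first_player_wins_def using vera_first_loses[OF _ v5] by simp
  have eh5: "[(True,False),(True,False),(False,False),(False,False),(False,False)] = (True,False) # (True,False) # replicate 3 (False,False)" by (simp add: numeral_eq_Suc)
  have h5: "wins_fuel 5 10 Vera {(0,0),(0,1)}" using from_cert[OF cH5] unfolding eh5 absc_H0 by simp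
  have nh5: "\<not> first_player_wins 5 Hepzibah" unfolding first_player_wins_def using hepz_first_loses[OF _ h5] by simp
  have ev9: "[(True,True),(False,False),(False,False),(False,False),(False,False),(False,False),(False,False),(False,False),(False,False)] = (True,True) # replicate 8 (False,False)" by (simp add: numeral_eq_Suc)
  have v9: "wins_fuel 9 18 Hepzibah {(0,0),(1,0)}" using from_cert[OF cV9] unfolding ev9 absc_V0 by simp
  have nv9: "\<not> first_player_wins 9 Vera" unfolding first_player_wins_def using vera_first_loses[OF _ v9] by simp
  have eh9: "[(True,False),(True,False),(False,False),(False,False),(False,False),(False,False),(False,False),(False,False),(False,False)] = (True,False) # (True,False) # replicate 7 (False,False)" by (simp add: numeral_eq_Suc)
  have h9: "wins_fuel 9 18 Vera {(0,0),(0,1)}" using from_cert[OF cH9] unfolding eh9 absc_H0 by simp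
  have nh9: "\<not> first_player_wins 9 Hepzibah" unfolding first_player_wins_def using hepz_first_loses[OF _ h9] by simp
  have ev13: "[(True,True),(False,False),(False,False),(False,False),(False,False),(False,False),(False,False),(False,False),(False,False),(False,False),(False,False),(False,False),(False,False)] = (True,True) # replicate 12 (False,False)" by (simp add: numeral_eq_Suc)
  have v13: "wins_fuel 13 26 Hepzibah {(0,0),(1,0)}" using from_cert[OF cV13] unfolding ev13 absc_V0 by simp
  have nv13: "\<not> first_player_wins 13 Vera" unfolding first_player_wins_def using vera_first_loses[OF _ v13] by simp
  have ew13: "[(False,False),(False,False),(False,False),(False,False),(False,False),(False,False),(False,False),(False,False),(False,False),(False,False),(False,False),(False,False),(False,False)] = replicate 13 (False,False)" by (simp add: numeral_eq_Suc)
  have w13: "first_player_wins 13 Hepzibah" unfolding first_player_wins_def using from_cert[OF cW13] unfolding ew13 absc_rep by simp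
  show ?thesis unfolding second_player_win_def hepzibah_win_def using nv5 nh5 nv9 nh9 nv13 w13 by blast
qed

end
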